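(* Let $E\subset\partial\mathbb{D}$ be closed and suppose $E$ contains no pair of antipodal points (no $\zeta$ with $\zeta,-\zeta\in E$). Then there is $\alpha\in[0,2\pi)$ such that $\{-ie^{i\alpha},\ e^{i\alpha},\ ie^{i\alpha}\}\subset\partial\mathbb{D}\setminus E$.
   Context: $\partial\mathbb{D}$ is the unit circle in $\mathbb{C}$. *)

theory Defs
  imports "HOL-Analysis.Analysis"
begin

end

theory Submission
  imports Defs
begin

lemma exp_rep:
  assumes "z \<in> sphere (0::complex) 1"
  shows "\<exists>\<alpha>::real. 0 \<le> \<alpha> \<and> \<alpha> < 2 * pi \<and> z = exp (\<i> * of_real \<alpha>)"
proof -
  have "cmod z = 1" using assms by simp
  then have "z = exp (\<i> * of_real (Arg2pi z))"
    using Arg2pi[of z] unfolding is_Arg_def by simp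
  then show ?thesis using Arg2pi[of z] by blast
qed

theorem lemma1:
  fixes E :: "complex set"
  assumes "closed E"
    and "E \<subseteq> sphere 0 1"
    and "\<not> (\<exists>\<zeta>. \<zeta> \<in> E \<and> - \<zeta> \<in> E)"
  shows "\<exists>\<alpha>::real. 0 \<le> \<alpha> \<and> \<alpha> < 2 * pi \<and>
           {- \<i> * exp (\<i> * of_real \<alpha>), exp (\<i> * of_real \<alpha>), \<i> * exp (\<i> * of_real \<alpha>)}
             \<subseteq> sphere 0 1 - E"
proof (rule ccontr)
  assume H: "\<not> ?thesis"
  have bad: "- \<i> * w \<in> E \<or> w \<in> E \<or> \<i> * w \<in> E" if w: "w \<in> sphere 0 1" for w
  proof -
    obtain \<alpha> :: real where a: "0 \<le> \<alpha>" "\<alpha> < 2 * pi" "w = exp (\<i> * of_real \<alpha>)"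
      using exp_rep[OF w] by blast
    have "cmod (- \<i> * w) = 1" "cmod w = 1" "cmod (\<i> * w) = 1" using w by (auto simp: norm_mult)
    moreover have "\<not> ({- \<i> * w, w, \<i> * w} \<subseteq> sphere 0 1 - E)"
      using H a by blast
    ultimately show ?thesis by auto
  qed
  have cover: "u \<in> E \<or> - u \<in> E" if u: "u \<in> sphere 0 1" for u
  proof -
    define w where "w = - \<i> * u"
    have w1: "w \<in> sphere 0 1" "- w \<in> sphere 0 1" using u by (auto simp: w_def norm_mult)
    have iw: "\<i> * w = u" "- \<i> * w = - u" "\<i> * - w = - u" "- \<i> * - w = u"
      by (auto simp: w_def algebra_simps)
    show ?thesis using bad[OF w1(1)] bad[OF w1(2)] assms(3) iw by (metis minus_minus)
  qed
  have c: "connected (sphere (0::complex) 1)" by (rule connected_sphere) auto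
  have cl: "closed (uminus ` E)" using assms(1) by (simp add: closed_negations)
  have one: "(1::complex) \<in> sphere 0 1" by simp
  have ne: "E \<noteq> {}" using cover[OF one] by blast
  have sub2: "uminus ` E \<subseteq> sphere 0 1" using assms(2) by auto
  have "sphere 0 1 \<subseteq> E \<union> uminus ` E"
  proof
    fix u :: complex assume "u \<in> sphere 0 1"
    then show "u \<in> E \<union> uminus ` E" using cover by (metis UnI1 UnI2 image_eqI minus_minus)
  qed
  moreover have "E \<inter> uminus ` E = {}" using assms(3) by auto
  moreover have "E \<inter> sphere 0 1 \<noteq> {}" "uminus ` E \<inter> sphere 0 1 \<noteq> {}"
    using ne assms(2) sub2 by auto
  ultimately have "\<exists>e1 e2. closed e1 \<and> closed e2 \<and> sphere (0::complex) 1 \<subseteq> e1 \<union> e2 \<and>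
      e1 \<inter> e2 \<inter> sphere 0 1 = {} \<and> e1 \<inter> sphere 0 1 \<noteq> {} \<and> e2 \<inter> sphere 0 1 \<noteq> {}"
    using assms(1) cl by (intro exI[of _ E] exI[of _ "uminus ` E"]) simp
  then show False using c unfolding connected_closed by blast
qed

end
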